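(* For every non-self-intersecting 4-periodic of the elliptic billiard, the product of its area $A$ and the area $A'$ of its outer polygon is $$A\,A'=8a^2b^2.$$
   Context: The elliptic billiard is $\mathcal{E}: x^2/a^2+y^2/b^2=1$, $a>b>0$. A non-self-intersecting 4-periodic is a quadrilateral $P_1P_2P_3P_4$ inscribed in $\mathcal{E}$ which is a closed billiard trajectory (at each vertex the normal to $\mathcal{E}$ bisects the angle between the two incident sides) with confocal elliptic caustic $x^2/a''^2+y^2/b''^2=1$, $a''=a^2/\sqrt{a^2+b^2}$, $b''=b^2/\sqrt{a^2+b^2}$; explicitly, for $P_1=(x_1,y_1)\in\mathcal{E}$: $P_2=\left(-\frac{a^4y_1}{\sqrt{b^6x_1^2+a^6y_1^2}},\frac{b^4x_1}{\sqrt{b^6x_1^2+a^6y_1^2}}\right)$, $P_3=-P_1$, $P_4=-P_2$. The outer polygon is the quadrilateral whose sides lie on the tangent lines to $\mathcal{E}$ at $P_1,\dots,P_4$ (vertex $P_i'$ is the intersection of the tangents at $P_i$ and $P_{i+1}$). *)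

theory Defs
  imports Complex_Main
begin

type_synonym pt = "real \<times> real"

definition on_ellipse :: "real \<Rightarrow> real \<Rightarrow> pt \<Rightarrow> bool" where
  "on_ellipse a b P \<longleftrightarrow> (fst P)^2 / a^2 + (snd P)^2 / b^2 = 1"

definition per4_P2 :: "real \<Rightarrow> real \<Rightarrow> pt \<Rightarrow> pt" where
  "per4_P2 a b P = (let x = fst P; y = snd P; d = sqrt (b^6 * x^2 + a^6 * y^2)
                    in (- (a^4 * y) / d, b^4 * x / d))"

definition per4 :: "real \<Rightarrow> real \<Rightarrow> pt \<Rightarrow> pt list" where
  "per4 a b P = (let Q = per4_P2 a b P in [P, Q, (- fst P, - snd P), (- fst Q, - snd Q)])"

definition on_tangent :: "real \<Rightarrow> real \<Rightarrow> pt \<Rightarrow> pt \<Rightarrow> bool" where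
  "on_tangent a b T Q \<longleftrightarrow> fst Q * fst T / a^2 + snd Q * snd T / b^2 = 1"

definition tangent_meet :: "real \<Rightarrow> real \<Rightarrow> pt \<Rightarrow> pt \<Rightarrow> pt" where
  "tangent_meet a b T U = (THE Q. on_tangent a b T Q \<and> on_tangent a b U Q)"

definition outer_poly :: "real \<Rightarrow> real \<Rightarrow> pt list \<Rightarrow> pt list" where
  "outer_poly a b ps = map (\<lambda>i. tangent_meet a b (ps ! i) (ps ! ((i + 1) mod length ps)))
                          [0..<length ps]"

definition poly_area :: "pt list \<Rightarrow> real" where
  "poly_area ps = \<bar>(\<Sum>i<length ps. fst (ps ! i) * snd (ps ! ((i + 1) mod length ps))
                                  - fst (ps ! ((i + 1) mod length ps)) * snd (ps ! i))\<bar> / 2"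

end

theory Submission
  imports Defs
begin

lemma tm:
  assumes "a \<noteq> 0" "b \<noteq> 0" "fst T * snd U - fst U * snd T \<noteq> 0"
  shows "tangent_meet a b T U =
    (a^2 * (snd U - snd T) / (fst T * snd U - fst U * snd T),
     b^2 * (fst T - fst U) / (fst T * snd U - fst U * snd T))"
proof -
  obtain p q where T: "T = (p,q)" by fastforce
  obtain r s where U: "U = (r,s)" by fastforce
  have w: "p*s - r*q \<noteq> 0" using assms T U by simp
  show ?thesis unfolding tangent_meet_def T U
  proof (rule the_equality)
    have "p * (a^2*(s-q)/(p*s-r*q)) / a^2 + q * (b^2*(p-r)/(p*s-r*q)) / b^2 = (p*(s-q) + q*(p-r))/(p*s-r*q)"
      using assms w by (simp add: divide_simps del: mult_eq_0_iff)
    also have "\<dots> = 1" using w by (simp add: algebra_simps)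
    finally have 1: "p * (a^2*(s-q)/(p*s-r*q)) / a^2 + q * (b^2*(p-r)/(p*s-r*q)) / b^2 = 1" .
    have "r * (a^2*(s-q)/(p*s-r*q)) / a^2 + s * (b^2*(p-r)/(p*s-r*q)) / b^2 = (r*(s-q) + s*(p-r))/(p*s-r*q)"
      using assms w by (simp add: divide_simps del: mult_eq_0_iff)
    also have "\<dots> = 1" using w by (simp add: algebra_simps)
    finally have 2: "r * (a^2*(s-q)/(p*s-r*q)) / a^2 + s * (b^2*(p-r)/(p*s-r*q)) / b^2 = 1" .
    show "on_tangent a b (p, q) (a\<^sup>2 * (snd (r, s) - snd (p, q)) / (fst (p, q) * snd (r, s) - fst (r, s) * snd (p, q)),
        b\<^sup>2 * (fst (p, q) - fst (r, s)) / (fst (p, q) * snd (r, s) - fst (r, s) * snd (p, q))) \<and>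
    on_tangent a b (r, s) (a\<^sup>2 * (snd (r, s) - snd (p, q)) / (fst (p, q) * snd (r, s) - fst (r, s) * snd (p, q)),
        b\<^sup>2 * (fst (p, q) - fst (r, s)) / (fst (p, q) * snd (r, s) - fst (r, s) * snd (p, q)))"
      unfolding on_tangent_def using 1 2 by (simp add: mult.commute)
  next
    fix Q assume h: "on_tangent a b (p, q) Q \<and> on_tangent a b (r, s) Q"
    obtain X Y where Q: "Q = (X,Y)" by fastforce
    have e1: "X*p*b^2 + Y*q*a^2 = a^2*b^2" and e2: "X*r*b^2 + Y*s*a^2 = a^2*b^2"
      using h assms unfolding Q on_tangent_def by (simp_all add: field_simps)
    have "X * (p*s - r*q) * b^2 = a^2*b^2*(s - q)"
    proof -
      have "X * (p*s - r*q) * b^2 = s*(X*p*b^2 + Y*q*a^2) - q*(X*r*b^2 + Y*s*a^2)" by (simp add: algebra_simps)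
      also have "\<dots> = a^2*b^2*(s - q)" unfolding e1 e2 by (simp add: algebra_simps)
      finally show ?thesis .
    qed
    then have "(X * (p*s - r*q) - a^2*(s - q)) * b^2 = 0" by (simp add: algebra_simps)
    then have "X * (p*s - r*q) = a^2*(s - q)" using assms by simp
    then have X: "X = a^2 * (s - q) / (p*s - r*q)" using w by (simp add: eq_divide_eq)
    have "Y * (p*s - r*q) * a^2 = b^2*a^2*(p - r)"
    proof -
      have "Y * (p*s - r*q) * a^2 = p*(X*r*b^2 + Y*s*a^2) - r*(X*p*b^2 + Y*q*a^2)" by (simp add: algebra_simps)
      also have "\<dots> = b^2*a^2*(p - r)" unfolding e1 e2 by (simp add: algebra_simps)
      finally show ?thesis .
    qed
    then have "(Y * (p*s - r*q) - b^2*(p - r)) * a^2 = 0" by (simp add: algebra_simps)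
    then have "Y * (p*s - r*q) = b^2*(p - r)" using assms by simp
    then have Y: "Y = b^2 * (p - r) / (p*s - r*q)" using w by (simp add: eq_divide_eq)
    show "Q = (a\<^sup>2 * (snd (r, s) - snd (p, q)) / (fst (p, q) * snd (r, s) - fst (r, s) * snd (p, q)), b\<^sup>2 * (fst (p, q) - fst (r, s)) / (fst (p, q) * snd (r, s) - fst (r, s) * snd (p, q)))" using X Y Q by simp
  qed
qed

lemma poly4: "poly_area [A,B,C,D] = \<bar>(fst A*snd B - fst B*snd A) + (fst B*snd C - fst C*snd B)
   + (fst C*snd D - fst D*snd C) + (fst D*snd A - fst A*snd D)\<bar> / 2"
proof -
  have e: "{..<4::nat} = {0,1,2,3}" by auto
  show ?thesis unfolding poly_area_def by (simp add: e algebra_simps)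
qed

lemma outer4: "outer_poly a b [A,B,C,D] = [tangent_meet a b A B, tangent_meet a b B C,
   tangent_meet a b C D, tangent_meet a b D A]"
proof -
  have e: "[0..<4] = [0,1,2,3::nat]" by (simp add: upt_rec)
  show ?thesis unfolding outer_poly_def by (simp add: e)
qed

lemma par: "poly_area [(p,q),(r,s),(-p,-q),(-r,-s)] = 2*\<bar>p*s - r*q\<bar>"
proof -
  have "(p*s - r*q) + (r*(-q) - (-p)*s) + ((-p)*(-s) - (-r)*(-q)) + ((-r)*q - p*(-s)) = 4*(p*s-r*q)"
    by (simp add: algebra_simps)
  then show ?thesis unfolding poly4 fst_conv snd_conv by (simp only: abs_mult)
qed

lemma gen:
  fixes a b x y u v :: real
  assumes "a \<noteq> 0" "b \<noteq> 0" "x*v - u*y \<noteq> 0"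
  shows "poly_area [(x,y),(u,v),(-x,-y),(-u,-v)] *
    poly_area (outer_poly a b [(x,y),(u,v),(-x,-y),(-u,-v)]) = 8*a^2*b^2"
proof -
  define w where "w = x*v - u*y"
  have w: "w \<noteq> 0" using assms w_def by simp
  have A: "poly_area [(x,y),(u,v),(-x,-y),(-u,-v)] = 2*\<bar>w\<bar>"
  proof -
    have "\<bar>4 * (v * x) - 4 * (u * y)\<bar> = 4*\<bar>x*v-u*y\<bar>" proof -
      have "4 * (v * x) - 4 * (u * y) = 4*(x*v-u*y)" by (simp add: algebra_simps)
      then show ?thesis by (simp only: abs_mult)
    qed
    then show ?thesis unfolding poly4 w_def by simp
  qed
  have o: "outer_poly a b [(x,y),(u,v),(-x,-y),(-u,-v)] =
    [(a^2*(v-y)/w, b^2*(x-u)/w), (a^2*(-y-v)/w, b^2*(u+x)/w),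
     (a^2*(y-v)/w, b^2*(u-x)/w), (a^2*(y+v)/w, b^2*(-u-x)/w)]"
    unfolding outer4 using assms by (simp add: tm w_def algebra_simps)
  have s: "(a^2*(v-y)/w) * (b^2*(u+x)/w) - (a^2*(-y-v)/w) * (b^2*(x-u)/w) = 2*a^2*b^2/w"
  proof -
    have num: "(v-y)*(u+x) + (y+v)*(x-u) = 2*w" by (simp add: w_def algebra_simps)
    have "(a^2*(v-y)/w) * (b^2*(u+x)/w) - (a^2*(-y-v)/w) * (b^2*(x-u)/w)
       = a^2*b^2*((v-y)*(u+x) + (y+v)*(x-u))/(w*w)" using w by (simp add: field_simps)
    also have "\<dots> = 2*a^2*b^2/w" unfolding num using w by (simp add: field_simps)
    finally show ?thesis .
  qed
  have o2: "outer_poly a b [(x,y),(u,v),(-x,-y),(-u,-v)] =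
    [(a^2*(v-y)/w, b^2*(x-u)/w), (a^2*(-y-v)/w, b^2*(u+x)/w),
     (-(a^2*(v-y)/w), -(b^2*(x-u)/w)), (-(a^2*(-y-v)/w), -(b^2*(u+x)/w))]"
    unfolding o using w by (simp add: field_simps)
  have B: "poly_area (outer_poly a b [(x,y),(u,v),(-x,-y),(-u,-v)]) = 4*a^2*b^2/\<bar>w\<bar>"
    unfolding o2 par s by (simp add: abs_mult)
  show ?thesis unfolding A B using w by simp
qed

theorem mainTheorem13:
  fixes a b :: real and P :: pt
  assumes "a > b" and "b > 0" and "on_ellipse a b P"
  shows "poly_area (per4 a b P) * poly_area (outer_poly a b (per4 a b P)) = 8 * a^2 * b^2"
proof -
  obtain x y where P: "P = (x,y)" by fastforce
  define d where "d = sqrt (b^6 * x^2 + a^6 * y^2)"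
  define u where "u = - (a^4 * y) / d"
  define v where "v = b^4 * x / d"
  have a0: "a \<noteq> 0" "b \<noteq> 0" using assms by auto
  have nz: "x \<noteq> 0 \<or> y \<noteq> 0" using assms(3) unfolding P on_ellipse_def by auto
  have pos: "b^6 * x^2 + a^6 * y^2 > 0"
    using nz a0 by (auto intro: add_pos_nonneg add_nonneg_pos)
  have d: "d > 0" unfolding d_def using pos by simp
  have Q: "per4_P2 a b P = (u, v)" unfolding per4_P2_def P u_def v_def d_def by (simp add: Let_def)
  have L: "per4 a b P = [(x,y),(u,v),(-x,-y),(-u,-v)]" unfolding per4_def Q by (simp add: P)
  have pos2: "b^4 * x^2 + a^4 * y^2 > 0"
    using nz a0 by (auto intro: add_pos_nonneg add_nonneg_pos)
  have "x*v - u*y = (b^4 * x^2 + a^4 * y^2) / d" unfolding u_def v_def using d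
    by (simp add: field_simps power2_eq_square)
  then have "x*v - u*y \<noteq> 0" using pos2 d by simp
  then show ?thesis unfolding L using gen a0 by blast
qed

end
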